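(* Let $\alpha\in\mathbb N^n$ and let $\mathcal A=\{u_1,\ldots,u_m\}$ be a set of monomials of $S=K[x_1,\ldots,x_n]$, minimal with respect to divisibility, such that $K[\mathcal A]$ is a homogeneous $K$-algebra. Identify $S$ with $K[x_{11},\ldots,x_{n1}]\subset S^\alpha$ via $x_i\mapsto x_{i1}$, so that $\mathcal A\subseteq\mathcal A^\alpha$ and $S_{\mathcal A}\subseteq S_{\mathcal A^\alpha}$. If $\mathcal G$ is the reduced Gröbner basis of $I_{\mathcal A^\alpha}$ with respect to a term order $<$ on $S_{\mathcal A^\alpha}$, then $\mathcal G\cap S_{\mathcal A}$ is the reduced Gröbner basis of $I_{\mathcal A}$ with respect to the term order on $S_{\mathcal A}$ induced (by restriction) from $<$.
   Context: $\mathbb N$ denotes the positive integers. For $\alpha=(k_1,\ldots,k_n)$, $S^\alpha=K[x_{ij}:1\le i\le n,1\le j\le k_i]$, $\pi:S^\alpha\to S$, $x_{ij}\mapsto x_i$, and $\mathcal A^\alpha$ is the set of monomials $w\in S^\alpha$ with $\pi(w)\in\mathcal A$. For a finite set $\mathcal B$ of monomials, $S_{\mathcal B}=K[y_u:u\in\mathcal B]$ is a polynomial ring, $K[\mathcal B]$ the $K$-algebra generated by $\mathcal B$, and the toric ideal $I_{\mathcal B}$ is the kernel of $S_{\mathcal B}\to K[\mathcal B]$, $y_u\mapsto u$. *)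

theory Defs
  imports Complex_Main "HOL-Library.Poly_Mapping"
begin

(* Monomials in variables of type 'v are exponent vectors 'v \<Rightarrow>\<^sub>0 nat;
polynomials with coefficients in 'k are ('v \<Rightarrow>\<^sub>0 nat) \<Rightarrow>\<^sub>0 'k
(convolution product from Poly_Mapping).  A polynomial ring K[x_v : v \<in> V]
is the set of polynomials all of whose monomials only involve variables in V. *)

definition mon_in :: "'v set \<Rightarrow> ('v \<Rightarrow>\<^sub>0 nat) \<Rightarrow> bool" where
  "mon_in V m \<longleftrightarrow> Poly_Mapping.keys m \<subseteq> V"

definition poly_in :: "'v set \<Rightarrow> (('v \<Rightarrow>\<^sub>0 nat) \<Rightarrow>\<^sub>0 'k::zero) \<Rightarrow> bool" where
  "poly_in V p \<longleftrightarrow> (\<forall>m\<in>Poly_Mapping.keys p. mon_in V m)"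

definition mdvd :: "('v \<Rightarrow>\<^sub>0 nat) \<Rightarrow> ('v \<Rightarrow>\<^sub>0 nat) \<Rightarrow> bool" where
  "mdvd a b \<longleftrightarrow> (\<exists>c. b = a + c)"

definition rename_mon :: "('v \<Rightarrow> 'w) \<Rightarrow> ('v \<Rightarrow>\<^sub>0 nat) \<Rightarrow> ('w \<Rightarrow>\<^sub>0 nat)" where
  "rename_mon f m = (\<Sum>v\<in>Poly_Mapping.keys m. Poly_Mapping.single (f v) (Poly_Mapping.lookup m v))"

definition rename_poly :: "('v \<Rightarrow> 'w) \<Rightarrow> (('v \<Rightarrow>\<^sub>0 nat) \<Rightarrow>\<^sub>0 'k::comm_monoid_add)
    \<Rightarrow> (('w \<Rightarrow>\<^sub>0 nat) \<Rightarrow>\<^sub>0 'k)" where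
  "rename_poly f p = (\<Sum>m\<in>Poly_Mapping.keys p. Poly_Mapping.single (rename_mon f m) (Poly_Mapping.lookup p m))"

(* Toric map S_B \<rightarrow> K[B], y_u \<mapsto> u (a K-algebra homomorphism given by
substitution), and the toric ideal I_B as its kernel in S_B = K[y_u : u \<in> B]. *)
definition toric_map :: "('v \<Rightarrow>\<^sub>0 nat) set \<Rightarrow> ((('v \<Rightarrow>\<^sub>0 nat) \<Rightarrow>\<^sub>0 nat) \<Rightarrow>\<^sub>0 'k::comm_ring_1)
    \<Rightarrow> (('v \<Rightarrow>\<^sub>0 nat) \<Rightarrow>\<^sub>0 'k)" where
  "toric_map B p = (\<Sum>m\<in>Poly_Mapping.keys p. Poly_Mapping.single 0 (Poly_Mapping.lookup p m) *
        (\<Prod>u\<in>Poly_Mapping.keys m. (Poly_Mapping.single u 1) ^ Poly_Mapping.lookup m u))"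

definition toric_ideal :: "('v \<Rightarrow>\<^sub>0 nat) set
    \<Rightarrow> ((('v \<Rightarrow>\<^sub>0 nat) \<Rightarrow>\<^sub>0 nat) \<Rightarrow>\<^sub>0 'k::comm_ring_1) set" where
  "toric_ideal B = {p. poly_in B p \<and> toric_map B p = 0}"

definition term_order :: "'v set \<Rightarrow> (('v \<Rightarrow>\<^sub>0 nat) \<Rightarrow> ('v \<Rightarrow>\<^sub>0 nat) \<Rightarrow> bool) \<Rightarrow> bool" where
  "term_order V lt \<longleftrightarrow>
     (\<forall>a. mon_in V a \<longrightarrow> \<not> lt a a) \<and>
     (\<forall>a b c. mon_in V a \<longrightarrow> mon_in V b \<longrightarrow> mon_in V c \<longrightarrow> lt a b \<longrightarrow> lt b c \<longrightarrow> lt a c) \<and>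
     (\<forall>a b. mon_in V a \<longrightarrow> mon_in V b \<longrightarrow> a \<noteq> b \<longrightarrow> lt a b \<or> lt b a) \<and>
     (\<forall>a. mon_in V a \<longrightarrow> a \<noteq> 0 \<longrightarrow> lt 0 a) \<and>
     (\<forall>a b c. mon_in V a \<longrightarrow> mon_in V b \<longrightarrow> mon_in V c \<longrightarrow> lt a b \<longrightarrow> lt (a + c) (b + c))"

definition lm :: "(('v \<Rightarrow>\<^sub>0 nat) \<Rightarrow> ('v \<Rightarrow>\<^sub>0 nat) \<Rightarrow> bool) \<Rightarrow> (('v \<Rightarrow>\<^sub>0 nat) \<Rightarrow>\<^sub>0 'k::zero)
    \<Rightarrow> ('v \<Rightarrow>\<^sub>0 nat)" where
  "lm lt p = (THE m. m \<in> Poly_Mapping.keys p \<and> (\<forall>m'\<in>Poly_Mapping.keys p. m' \<noteq> m \<longrightarrow> lt m' m))"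

definition lc :: "(('v \<Rightarrow>\<^sub>0 nat) \<Rightarrow> ('v \<Rightarrow>\<^sub>0 nat) \<Rightarrow> bool) \<Rightarrow> (('v \<Rightarrow>\<^sub>0 nat) \<Rightarrow>\<^sub>0 'k::zero) \<Rightarrow> 'k" where
  "lc lt p = Poly_Mapping.lookup p (lm lt p)"

definition is_reduced_GB :: "(('v \<Rightarrow>\<^sub>0 nat) \<Rightarrow> ('v \<Rightarrow>\<^sub>0 nat) \<Rightarrow> bool)
    \<Rightarrow> (('v \<Rightarrow>\<^sub>0 nat) \<Rightarrow>\<^sub>0 'k::{zero,one}) set \<Rightarrow> (('v \<Rightarrow>\<^sub>0 nat) \<Rightarrow>\<^sub>0 'k) set \<Rightarrow> bool" where
  "is_reduced_GB lt I G \<longleftrightarrow>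
     finite G \<and> G \<subseteq> I \<and> 0 \<notin> G \<and>
     (\<forall>f\<in>I. f \<noteq> 0 \<longrightarrow> (\<exists>g\<in>G. mdvd (lm lt g) (lm lt f))) \<and>
     (\<forall>g\<in>G. lc lt g = 1) \<and>
     (\<forall>g\<in>G. \<forall>g'\<in>G. g' \<noteq> g \<longrightarrow> (\<forall>m\<in>Poly_Mapping.keys g. \<not> mdvd (lm lt g') m))"

(* Expansion data: S = K[x_1..x_n], alpha = (k_1..k_n) with k_i \<ge> 1,
S^alpha = K[x_ij : 1 \<le> i \<le> n, 1 \<le> j \<le> k_i]; pi : x_ij \<mapsto> x_i. *)
definition exp_vars :: "nat \<Rightarrow> (nat \<Rightarrow> nat) \<Rightarrow> (nat \<times> nat) set" where
  "exp_vars n k = {(i, j). 1 \<le> i \<and> i \<le> n \<and> 1 \<le> j \<and> j \<le> k i}"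

definition exp_pi :: "((nat \<times> nat) \<Rightarrow>\<^sub>0 nat) \<Rightarrow> (nat \<Rightarrow>\<^sub>0 nat)" where
  "exp_pi w = rename_mon fst w"

definition exp_incl :: "(nat \<Rightarrow>\<^sub>0 nat) \<Rightarrow> ((nat \<times> nat) \<Rightarrow>\<^sub>0 nat)" where
  "exp_incl u = rename_mon (\<lambda>i. (i, 1)) u"

definition expansion :: "nat \<Rightarrow> (nat \<Rightarrow> nat) \<Rightarrow> (nat \<Rightarrow>\<^sub>0 nat) set \<Rightarrow> ((nat \<times> nat) \<Rightarrow>\<^sub>0 nat) set" where
  "expansion n k A = {w. mon_in (exp_vars n k) w \<and> exp_pi w \<in> A}"

(* K[A] is a homogeneous K-algebra: there is a rational weight vector c with <c,a> = 1 for all a \<in> A. *)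
definition homogeneous_toric :: "nat \<Rightarrow> (nat \<Rightarrow>\<^sub>0 nat) set \<Rightarrow> bool" where
  "homogeneous_toric n A \<longleftrightarrow> (\<exists>c :: nat \<Rightarrow> rat. \<forall>a\<in>A. (\<Sum>i=1..n. c i * of_nat (Poly_Mapping.lookup a i)) = 1)"

end

theory Submission
  imports Defs
begin


definition push :: "('a \<Rightarrow> 'b) \<Rightarrow> ('a \<Rightarrow>\<^sub>0 'c::comm_monoid_add) \<Rightarrow> ('b \<Rightarrow>\<^sub>0 'c)" where
  "push h q = (\<Sum>x\<in>Poly_Mapping.keys q. Poly_Mapping.single (h x) (Poly_Mapping.lookup q x))"

lemma rename_mon_push: "rename_mon f = push f"
  by (auto simp: fun_eq_iff rename_mon_def push_def)

lemma rename_poly_push: "rename_poly f = push (rename_mon f)"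
  by (auto simp: fun_eq_iff rename_poly_def push_def)

lemma lookup_push: "Poly_Mapping.lookup (push h q) y = sum (Poly_Mapping.lookup q) {x\<in>Poly_Mapping.keys q. h x = y}"
proof -
  have "Poly_Mapping.lookup (push h q) y = (\<Sum>x\<in>Poly_Mapping.keys q. if h x = y then Poly_Mapping.lookup q x else 0)"
    unfolding push_def lookup_sum by (rule sum.cong) (auto simp: lookup_single when_def)
  also have "\<dots> = sum (Poly_Mapping.lookup q) {x\<in>Poly_Mapping.keys q. h x = y}"
    by (simp add: sum.inter_filter)
  finally show ?thesis .
qed

lemma lookup_push_inj: "inj h \<Longrightarrow> Poly_Mapping.lookup (push h q) (h x) = Poly_Mapping.lookup q x"
proof -
  assume "inj h"
  then have "{x'\<in>Poly_Mapping.keys q. h x' = h x} = (if x \<in> Poly_Mapping.keys q then {x} else {})"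
    by (auto dest: injD)
  then show ?thesis by (auto simp: lookup_push in_keys_iff)
qed

lemma lookup_push_notin: "y \<notin> range h \<Longrightarrow> Poly_Mapping.lookup (push h q) y = 0"
  by (auto simp: lookup_push intro!: sum.neutral)

lemma keys_push: "inj h \<Longrightarrow> Poly_Mapping.keys (push h q) = h ` Poly_Mapping.keys q"
proof
  assume "inj h"
  show "Poly_Mapping.keys (push h q) \<subseteq> h ` Poly_Mapping.keys q"
  proof
    fix y assume y: "y \<in> Poly_Mapping.keys (push h q)"
    then have "{x\<in>Poly_Mapping.keys q. h x = y} \<noteq> {}"
      by (metis in_keys_iff lookup_push sum.empty)
    then show "y \<in> h ` Poly_Mapping.keys q" by auto
  qed
  show "h ` Poly_Mapping.keys q \<subseteq> Poly_Mapping.keys (push h q)"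
    using \<open>inj h\<close> by (auto simp: in_keys_iff lookup_push_inj)
qed

lemma inj_push: "inj h \<Longrightarrow> inj (push h :: ('a \<Rightarrow>\<^sub>0 'c::comm_monoid_add) \<Rightarrow> _)"
proof (rule injI)
  fix a b :: "'a \<Rightarrow>\<^sub>0 'c" assume "inj h" "push h a = push h b"
  then show "a = b"
    by (metis poly_mapping_eqI lookup_push_inj)
qed

lemma push_surj:
  assumes "inj h" "Poly_Mapping.keys q \<subseteq> h ` X"
  shows "\<exists>q0. Poly_Mapping.keys q0 \<subseteq> X \<and> push h q0 = (q :: _ \<Rightarrow>\<^sub>0 'c::comm_monoid_add)"
proof -
  have fin: "finite {x. Poly_Mapping.lookup q (h x) \<noteq> 0}"
  proof -
    have "{x. Poly_Mapping.lookup q (h x) \<noteq> 0} = h -` Poly_Mapping.keys q" by (auto simp: in_keys_iff)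
    then show ?thesis using assms(1) by (simp add: finite_vimageI)
  qed
  define q0 where "q0 = Abs_poly_mapping (\<lambda>x. Poly_Mapping.lookup q (h x))"
  have l: "Poly_Mapping.lookup q0 = (\<lambda>x. Poly_Mapping.lookup q (h x))" using fin by (simp add: q0_def)
  have "Poly_Mapping.keys q0 \<subseteq> X"
  proof
    fix x assume "x \<in> Poly_Mapping.keys q0"
    then have "h x \<in> Poly_Mapping.keys q" by (simp add: in_keys_iff l)
    then show "x \<in> X" using assms by (auto dest: injD)
  qed
  moreover have "push h q0 = q"
  proof (rule poly_mapping_eqI)
    fix y show "Poly_Mapping.lookup (push h q0) y = Poly_Mapping.lookup q y"
    proof (cases "y \<in> range h")
      case True then obtain x where "y = h x" by auto
      then show ?thesis using assms(1) by (simp add: lookup_push_inj l)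
    next
      case False
      then have "y \<notin> Poly_Mapping.keys q" using assms(2) by auto
      then show ?thesis using False by (simp add: lookup_push_notin in_keys_iff)
    qed
  qed
  ultimately show ?thesis by blast
qed

lemma push_zero [simp]: "push h 0 = 0"
  by (simp add: push_def)



definition evm :: "(('v \<Rightarrow>\<^sub>0 nat) \<Rightarrow>\<^sub>0 nat) \<Rightarrow> ('v \<Rightarrow>\<^sub>0 nat)" where
  "evm m = (\<Sum>u\<in>Poly_Mapping.keys m. \<Sum>j<Poly_Mapping.lookup m u. u)"

lemma lookup_evm: "Poly_Mapping.lookup (evm m) x =
   (\<Sum>u\<in>Poly_Mapping.keys m. Poly_Mapping.lookup m u * Poly_Mapping.lookup u x)"
  unfolding evm_def lookup_sum by simp

lemma single_pow:
  "(Poly_Mapping.single (u::'v \<Rightarrow>\<^sub>0 nat) (1::'k::comm_ring_1)) ^ e = Poly_Mapping.single (\<Sum>j<e. u) 1"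
  by (induction e) (simp_all add: mult_single add.commute)

lemma prod_single:
  assumes "finite S"
  shows "(\<Prod>u\<in>S. (Poly_Mapping.single (u::'v \<Rightarrow>\<^sub>0 nat) (1::'k::comm_ring_1)) ^ e u)
     = Poly_Mapping.single (\<Sum>u\<in>S. \<Sum>j<e u. u) 1"
  using assms by (induction S rule: finite_induct) (simp_all add: single_pow mult_single)

lemma toric_map_push: "toric_map B (p :: _ \<Rightarrow>\<^sub>0 'k::comm_ring_1) = push evm p"
  unfolding toric_map_def push_def
  by (rule sum.cong) (simp_all add: prod_single[where 'k='k] mult_single evm_def)

lemma toric_map_zero_iff:
  "toric_map B (p :: _ \<Rightarrow>\<^sub>0 'k::comm_ring_1) = 0 \<longleftrightarrow>
    (\<forall>b. sum (Poly_Mapping.lookup p) {m\<in>Poly_Mapping.keys p. evm m = b} = 0)"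
  by (auto simp: toric_map_push poly_mapping_eq_iff fun_eq_iff lookup_push)



lemma lm_eqI:
  assumes irr: "\<forall>a\<in>S. \<not> lt a a"
    and tr: "\<forall>a\<in>S. \<forall>b\<in>S. \<forall>c\<in>S. lt a b \<longrightarrow> lt b c \<longrightarrow> lt a c"
    and sub: "Poly_Mapping.keys p \<subseteq> S" and m: "m \<in> Poly_Mapping.keys p"
    and mx: "\<forall>m'\<in>Poly_Mapping.keys p. m' \<noteq> m \<longrightarrow> lt m' m"
  shows "lm lt p = m"
  unfolding lm_def
proof (rule the_equality)
  show "m \<in> Poly_Mapping.keys p \<and> (\<forall>m'\<in>Poly_Mapping.keys p. m' \<noteq> m \<longrightarrow> lt m' m)"
    using m mx by blast
next
  fix m2 assume h: "m2 \<in> Poly_Mapping.keys p \<and> (\<forall>m'\<in>Poly_Mapping.keys p. m' \<noteq> m2 \<longrightarrow> lt m' m2)"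
  show "m2 = m"
  proof (rule ccontr)
    assume "m2 \<noteq> m"
    then have "lt m2 m" "lt m m2" using h m mx by auto
    then have "lt m m" using tr sub h m by blast
    then show False using irr sub m by blast
  qed
qed

lemma max_ex:
  assumes "finite F" "F \<noteq> {}" "F \<subseteq> S"
    and tr: "\<forall>a\<in>S. \<forall>b\<in>S. \<forall>c\<in>S. lt a b \<longrightarrow> lt b c \<longrightarrow> lt a c"
    and tot: "\<forall>a\<in>S. \<forall>b\<in>S. a \<noteq> b \<longrightarrow> lt a b \<or> lt b a"
  shows "\<exists>m\<in>F. \<forall>m'\<in>F. m' \<noteq> m \<longrightarrow> lt m' m"
  using assms(1,2,3)
proof (induction F rule: finite_ne_induct)
  case (singleton x) then show ?case by auto
next
  case (insert x F)
  then obtain m where m: "m \<in> F" "\<forall>m'\<in>F. m' \<noteq> m \<longrightarrow> lt m' m" by auto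
  have "x \<noteq> m" using insert m by auto
  show ?case
  proof (cases "lt x m")
    case True then show ?thesis using m by auto
  next
    case False
    then have xm: "lt m x" using tot insert.prems m \<open>x \<noteq> m\<close> by blast
    have "\<forall>m'\<in>insert x F. m' \<noteq> x \<longrightarrow> lt m' x"
    proof (intro ballI impI)
      fix m' assume "m' \<in> insert x F" "m' \<noteq> x"
      then have "m' \<in> F" by auto
      show "lt m' x"
      proof (cases "m' = m")
        case True then show ?thesis using xm by simp
      next
        case False
        then have "lt m' m" using m \<open>m' \<in> F\<close> by auto
        then show ?thesis using tr xm insert.prems m \<open>m' \<in> F\<close> by blast
      qed
    qed
    then show ?thesis by auto
  qed
qed

lemma lm_ex:
  assumes irr: "\<forall>a\<in>S. \<not> lt a a"
    and tr: "\<forall>a\<in>S. \<forall>b\<in>S. \<forall>c\<in>S. lt a b \<longrightarrow> lt b c \<longrightarrow> lt a c"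
    and tot: "\<forall>a\<in>S. \<forall>b\<in>S. a \<noteq> b \<longrightarrow> lt a b \<or> lt b a"
    and sub: "Poly_Mapping.keys p \<subseteq> S" and p: "p \<noteq> 0"
  shows "lm lt p \<in> Poly_Mapping.keys p \<and> (\<forall>m'\<in>Poly_Mapping.keys p. m' \<noteq> lm lt p \<longrightarrow> lt m' (lm lt p))"
proof -
  obtain m where m: "m \<in> Poly_Mapping.keys p" "\<forall>m'\<in>Poly_Mapping.keys p. m' \<noteq> m \<longrightarrow> lt m' m"
    using max_ex[OF finite_keys _ sub tr tot] p by auto
  have "lm lt p = m" by (rule lm_eqI[OF irr tr sub m])
  then show ?thesis using m by simp
qed



lemma push_comp:
  assumes "inj h"
  shows "push g (push h q) = push (g \<circ> h) q"
proof (rule poly_mapping_eqI)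
  fix z
  have "{y \<in> Poly_Mapping.keys (push h q). g y = z} = h ` {x\<in>Poly_Mapping.keys q. g (h x) = z}"
    using keys_push[OF assms] by auto
  then have "Poly_Mapping.lookup (push g (push h q)) z
      = sum (Poly_Mapping.lookup (push h q)) (h ` {x\<in>Poly_Mapping.keys q. g (h x) = z})"
    by (simp add: lookup_push)
  also have "\<dots> = sum (\<lambda>x. Poly_Mapping.lookup (push h q) (h x)) {x\<in>Poly_Mapping.keys q. g (h x) = z}"
    using sum.reindex[OF inj_on_subset[OF assms subset_UNIV]] by (simp add: comp_def)
  also have "\<dots> = Poly_Mapping.lookup (push (g \<circ> h) q) z"
    by (simp only: lookup_push_inj[OF assms]) (simp add: lookup_push)
  finally show "Poly_Mapping.lookup (push g (push h q)) z = Poly_Mapping.lookup (push (g \<circ> h) q) z" .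
qed

lemma push_id: "push id q = q"
proof (rule poly_mapping_eqI)
  fix y
  have "{x\<in>Poly_Mapping.keys q. id x = y} = (if y \<in> Poly_Mapping.keys q then {y} else {})" by auto
  then show "Poly_Mapping.lookup (push id q) y = Poly_Mapping.lookup q y"
    by (auto simp: lookup_push in_keys_iff)
qed

lemma push_add_inj:
  assumes "inj h"
  shows "push h (a + b) = push h a + push h b"
proof (rule poly_mapping_eqI)
  fix y show "Poly_Mapping.lookup (push h (a + b)) y = Poly_Mapping.lookup (push h a + push h b) y"
  proof (cases "y \<in> range h")
    case True then obtain x where "y = h x" by auto
    then show ?thesis using assms by (simp add: lookup_push_inj lookup_add)
  next
    case False then show ?thesis by (simp add: lookup_push_notin lookup_add)
  qed
qed

lemma keys_add_nat_right: "Poly_Mapping.keys (c::'a \<Rightarrow>\<^sub>0 nat) \<subseteq> Poly_Mapping.keys (a + c)"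
proof
  fix x assume "x \<in> Poly_Mapping.keys c"
  then have "Poly_Mapping.lookup c x \<noteq> 0" by (simp add: in_keys_iff)
  then have "Poly_Mapping.lookup (a + c) x \<noteq> 0" by (simp add: lookup_add)
  then show "x \<in> Poly_Mapping.keys (a + c)" by (simp add: in_keys_iff)
qed

lemma keys_add_nat_left: "Poly_Mapping.keys (a::'a \<Rightarrow>\<^sub>0 nat) \<subseteq> Poly_Mapping.keys (a + c)"
proof
  fix x assume "x \<in> Poly_Mapping.keys a"
  then have "Poly_Mapping.lookup a x \<noteq> 0" by (simp add: in_keys_iff)
  then have "Poly_Mapping.lookup (a + c) x \<noteq> 0" by (simp add: lookup_add)
  then show "x \<in> Poly_Mapping.keys (a + c)" by (simp add: in_keys_iff)
qed



definition incl1 :: "nat \<Rightarrow> nat \<times> nat" where "incl1 i = (i, 1)"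

lemma inj_incl1: "inj incl1" by (simp add: inj_def incl1_def)

lemma exp_incl_eq: "exp_incl = push incl1"
  by (simp add: fun_eq_iff exp_incl_def rename_mon_push incl1_def[abs_def])

lemma inj_exp_incl: "inj exp_incl"
  by (simp add: exp_incl_eq inj_push inj_incl1)

lemma inj_iotam: "inj (push exp_incl :: ((nat \<Rightarrow>\<^sub>0 nat) \<Rightarrow>\<^sub>0 nat) \<Rightarrow> _)"
  by (simp add: inj_push inj_exp_incl)

lemma inj_iota: "inj (push (push exp_incl) :: (((nat \<Rightarrow>\<^sub>0 nat) \<Rightarrow>\<^sub>0 nat) \<Rightarrow>\<^sub>0 'k::comm_monoid_add) \<Rightarrow> _)"
  by (simp add: inj_push inj_iotam)

lemma exp_pi_incl: "exp_pi (exp_incl u) = u"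
proof -
  have "fst \<circ> incl1 = id" by (simp add: fun_eq_iff incl1_def)
  then show ?thesis
    by (simp add: exp_pi_def exp_incl_eq rename_mon_push push_comp[OF inj_incl1] push_id)
qed

lemma evm_iota: "evm (push exp_incl m) = push incl1 (evm m)"
proof (rule poly_mapping_eqI)
  fix x
  have K: "Poly_Mapping.keys (push exp_incl m) = exp_incl ` Poly_Mapping.keys m"
    by (rule keys_push[OF inj_exp_incl])
  have R: "Poly_Mapping.lookup (evm (push exp_incl m)) x =
     (\<Sum>u\<in>Poly_Mapping.keys m. Poly_Mapping.lookup m u * Poly_Mapping.lookup (exp_incl u) x)"
    unfolding lookup_evm K
    apply (subst sum.reindex)
     apply (rule inj_on_subset[OF inj_exp_incl subset_UNIV])
    apply (simp add: comp_def lookup_push_inj[OF inj_exp_incl])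
    done
  show "Poly_Mapping.lookup (evm (push exp_incl m)) x = Poly_Mapping.lookup (push incl1 (evm m)) x"
  proof (cases "x \<in> range incl1")
    case True
    then obtain i where x: "x = incl1 i" by auto
    show ?thesis
      by (subst R) (simp add: x lookup_push_inj[OF inj_incl1] exp_incl_eq lookup_evm)
  next
    case False
    then show ?thesis unfolding R
      by (simp add: lookup_push_notin exp_incl_eq)
  qed
qed

lemma fiber_iota:
  "sum (Poly_Mapping.lookup (push (push exp_incl) p)) {M\<in>Poly_Mapping.keys (push (push exp_incl) p). evm M = b}
   = sum (Poly_Mapping.lookup p) {m\<in>Poly_Mapping.keys p. push incl1 (evm m) = b}"
proof -
  have "{M\<in>Poly_Mapping.keys (push (push exp_incl) p). evm M = b}
      = push exp_incl ` {m\<in>Poly_Mapping.keys p. push incl1 (evm m) = b}"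
    by (auto simp: keys_push[OF inj_iotam] evm_iota)
  then show ?thesis
    apply simp
    apply (subst sum.reindex)
     apply (rule inj_on_subset[OF inj_iotam subset_UNIV])
    apply (simp add: comp_def lookup_push_inj[OF inj_iotam])
    done
qed

lemma toric_iota:
  "toric_map B' (push (push exp_incl) p) = 0 \<longleftrightarrow> toric_map B (p :: _ \<Rightarrow>\<^sub>0 'k::comm_ring_1) = 0"
proof -
  have inj1: "inj (push incl1 :: (nat \<Rightarrow>\<^sub>0 nat) \<Rightarrow> _)" by (simp add: inj_push inj_incl1)
  have a: "sum (Poly_Mapping.lookup p) {m\<in>Poly_Mapping.keys p. push incl1 (evm m) = push incl1 b0}
      = sum (Poly_Mapping.lookup p) {m\<in>Poly_Mapping.keys p. evm m = b0}" for b0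
    using inj1 by (simp add: inj_eq)
  have b: "{m\<in>Poly_Mapping.keys p. push incl1 (evm m) = b} = {}" if "b \<notin> range (push incl1)" for b
    using that by auto
  show ?thesis
    unfolding toric_map_zero_iff fiber_iota
  proof
    assume h: "\<forall>b. sum (Poly_Mapping.lookup p) {m\<in>Poly_Mapping.keys p. push incl1 (evm m) = b} = 0"
    show "\<forall>b. sum (Poly_Mapping.lookup p) {m\<in>Poly_Mapping.keys p. evm m = b} = 0"
      using h a by metis
  next
    assume h: "\<forall>b. sum (Poly_Mapping.lookup p) {m\<in>Poly_Mapping.keys p. evm m = b} = 0"
    show "\<forall>b. sum (Poly_Mapping.lookup p) {m\<in>Poly_Mapping.keys p. push incl1 (evm m) = b} = 0"
    proof
      fix b show "sum (Poly_Mapping.lookup p) {m\<in>Poly_Mapping.keys p. push incl1 (evm m) = b} = 0"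
      proof (cases "b \<in> range (push incl1)")
        case True then obtain b0 where "b = push incl1 b0" by auto
        then show ?thesis using a h by simp
      next
        case False then show ?thesis unfolding b[OF False] by simp
      qed
    qed
  qed
qed

lemma mdvd_iota:
  assumes "mdvd (push exp_incl a) (push exp_incl b)"
  shows "mdvd a (b :: (nat \<Rightarrow>\<^sub>0 nat) \<Rightarrow>\<^sub>0 nat)"
proof -
  obtain c where c: "push exp_incl b = push exp_incl a + c" using assms by (auto simp: mdvd_def)
  have "Poly_Mapping.keys c \<subseteq> exp_incl ` UNIV"
    using keys_add_nat_right[of c "push exp_incl a"] c keys_push[OF inj_exp_incl, of b] by auto
  then obtain c0 where "push exp_incl c0 = c" using push_surj[OF inj_exp_incl] by blast
  then have "push exp_incl (a + c0) = push exp_incl a + c" by (metis push_add_inj[OF inj_exp_incl])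
  then have "push exp_incl b = push exp_incl (a + c0)" using c by simp
  then have "b = a + c0" using inj_iotam by (simp add: inj_eq)
  then show ?thesis by (auto simp: mdvd_def)
qed

lemma mdvd_iota2:
  assumes "mdvd a (b :: (nat \<Rightarrow>\<^sub>0 nat) \<Rightarrow>\<^sub>0 nat)"
  shows "mdvd (push exp_incl a) (push exp_incl b)"
  using assms push_add_inj[OF inj_exp_incl] by (auto simp: mdvd_def)



locale gbsetup =
  fixes n :: nat and k :: "nat \<Rightarrow> nat" and A :: "(nat \<Rightarrow>\<^sub>0 nat) set"
    and lt :: "(((nat \<times> nat) \<Rightarrow>\<^sub>0 nat) \<Rightarrow>\<^sub>0 nat) \<Rightarrow> (((nat \<times> nat) \<Rightarrow>\<^sub>0 nat) \<Rightarrow>\<^sub>0 nat) \<Rightarrow> bool"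
    and G :: "((((nat \<times> nat) \<Rightarrow>\<^sub>0 nat) \<Rightarrow>\<^sub>0 nat) \<Rightarrow>\<^sub>0 'k::field) set"
  assumes alpha: "\<forall>i\<in>{1..n}. 1 \<le> k i"
    and A_mons: "\<forall>u\<in>A. mon_in {1..n} u"
    and ord: "term_order (expansion n k A) lt"
    and GB: "is_reduced_GB lt (toric_ideal (expansion n k A)) G"
begin

abbreviation "E \<equiv> expansion n k A"
abbreviation "SE \<equiv> {a. mon_in E a}"

lemma irr: "\<forall>a\<in>SE. \<not> lt a a" using ord unfolding term_order_def by blast
lemma tr: "\<forall>a\<in>SE. \<forall>b\<in>SE. \<forall>c\<in>SE. lt a b \<longrightarrow> lt b c \<longrightarrow> lt a c" using ord unfolding term_order_def by blast
lemma tot: "\<forall>a\<in>SE. \<forall>b\<in>SE. a \<noteq> b \<longrightarrow> lt a b \<or> lt b a" using ord unfolding term_order_def by blast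
lemma zero_lt: "mon_in E a \<Longrightarrow> a \<noteq> 0 \<Longrightarrow> lt 0 a" using ord unfolding term_order_def by blast
lemma mono: "mon_in E a \<Longrightarrow> mon_in E b \<Longrightarrow> mon_in E c \<Longrightarrow> lt a b \<Longrightarrow> lt (a + c) (b + c)"
  using ord unfolding term_order_def by blast

lemma GB_fin: "finite G" using GB unfolding is_reduced_GB_def by blast
lemma GB_sub: "G \<subseteq> toric_ideal E" using GB unfolding is_reduced_GB_def by blast
lemma GB_0: "0 \<notin> G" using GB unfolding is_reduced_GB_def by blast
lemma GB_dvd: "(f :: _ \<Rightarrow>\<^sub>0 'k) \<in> toric_ideal E \<Longrightarrow> f \<noteq> 0 \<Longrightarrow> \<exists>g\<in>G. mdvd (lm lt g) (lm lt f)"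
  using GB unfolding is_reduced_GB_def by blast
lemma GB_lc: "g \<in> G \<Longrightarrow> lc lt g = 1" using GB unfolding is_reduced_GB_def by blast
lemma GB_red: "g \<in> G \<Longrightarrow> g' \<in> G \<Longrightarrow> g' \<noteq> g \<Longrightarrow> m \<in> Poly_Mapping.keys g \<Longrightarrow> \<not> mdvd (lm lt g') m"
  using GB unfolding is_reduced_GB_def by blast

lemma incl_in_E: assumes "u \<in> A" shows "exp_incl u \<in> E"
proof -
  have "Poly_Mapping.keys (exp_incl u) = incl1 ` Poly_Mapping.keys u"
    by (simp add: exp_incl_eq keys_push[OF inj_incl1])
  moreover have "Poly_Mapping.keys u \<subseteq> {1..n}" using A_mons assms by (simp add: mon_in_def)
  ultimately have "Poly_Mapping.keys (exp_incl u) \<subseteq> exp_vars n k"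
  proof -
    assume K: "Poly_Mapping.keys (exp_incl u) = incl1 ` Poly_Mapping.keys u"
      and S: "Poly_Mapping.keys u \<subseteq> {1..n}"
    show ?thesis
    proof
      fix x assume "x \<in> Poly_Mapping.keys (exp_incl u)"
      then obtain i where i: "i \<in> Poly_Mapping.keys u" "x = (i, 1)" using K by (auto simp: incl1_def)
      then have "i \<in> {1..n}" using S by blast
      then have "1 \<le> k i" using alpha by blast
      then show "x \<in> exp_vars n k" using i \<open>i \<in> {1..n}\<close> by (simp add: exp_vars_def)
    qed
  qed
  then show ?thesis using assms by (simp add: expansion_def mon_in_def exp_pi_incl)
qed

lemma E_col1: assumes "w \<in> E" "Poly_Mapping.keys w \<subseteq> range incl1" shows "w \<in> exp_incl ` A"
proof -
  obtain u where u: "push incl1 u = w" using push_surj[OF inj_incl1 assms(2)] by blast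
  then have "exp_incl u = w" by (simp add: exp_incl_eq)
  moreover have "u \<in> A" using assms(1) exp_pi_incl[of u] \<open>exp_incl u = w\<close> by (simp add: expansion_def)
  ultimately show ?thesis by blast
qed

lemma col1_iff:
  assumes "Poly_Mapping.keys M \<subseteq> E"
  shows "Poly_Mapping.keys M \<subseteq> exp_incl ` A \<longleftrightarrow> Poly_Mapping.keys (evm M) \<subseteq> range incl1"
proof
  assume h: "Poly_Mapping.keys M \<subseteq> exp_incl ` A"
  show "Poly_Mapping.keys (evm M) \<subseteq> range incl1"
  proof
    fix x assume x: "x \<in> Poly_Mapping.keys (evm M)"
    show "x \<in> range incl1"
    proof (rule ccontr)
      assume nx: "x \<notin> range incl1"
      have "\<forall>w\<in>Poly_Mapping.keys M. Poly_Mapping.lookup w x = 0"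
      proof
        fix w assume "w \<in> Poly_Mapping.keys M"
        then obtain u where "w = exp_incl u" using h by auto
        then show "Poly_Mapping.lookup w x = 0" using nx by (simp add: exp_incl_eq lookup_push_notin)
      qed
      then have "Poly_Mapping.lookup (evm M) x = 0" by (simp add: lookup_evm)
      then show False using x by (simp add: in_keys_iff)
    qed
  qed
next
  assume h: "Poly_Mapping.keys (evm M) \<subseteq> range incl1"
  show "Poly_Mapping.keys M \<subseteq> exp_incl ` A"
  proof
    fix w assume w: "w \<in> Poly_Mapping.keys M"
    have "Poly_Mapping.keys w \<subseteq> range incl1"
    proof
      fix x assume x: "x \<in> Poly_Mapping.keys w"
      have "Poly_Mapping.lookup M w * Poly_Mapping.lookup w x \<le>
          (\<Sum>u\<in>Poly_Mapping.keys M. Poly_Mapping.lookup M u * Poly_Mapping.lookup u x)"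
        by (rule member_le_sum) (use w in auto)
      moreover have "Poly_Mapping.lookup M w * Poly_Mapping.lookup w x > 0"
        using w x by (simp add: in_keys_iff)
      ultimately have "0 < Poly_Mapping.lookup (evm M) x" unfolding lookup_evm by linarith
      then have "x \<in> Poly_Mapping.keys (evm M)" by (simp add: in_keys_iff)
      then show "x \<in> range incl1" using h by blast
    qed
    then show "w \<in> exp_incl ` A" using E_col1 w assms by blast
  qed
qed

lemma poly_iota: assumes "poly_in A p" shows "poly_in E (push (push exp_incl) p)"
  using assms incl_in_E
  by (auto simp: poly_in_def mon_in_def keys_push[OF inj_iotam] keys_push[OF inj_exp_incl])

lemma toric_iff:
  assumes "poly_in A p"
  shows "p \<in> toric_ideal A \<longleftrightarrow> push (push exp_incl) p \<in> toric_ideal E"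
  using assms poly_iota[OF assms] toric_iota[of E p A] by (simp add: toric_ideal_def)

lemma keys_sub_SE: "poly_in E q \<Longrightarrow> Poly_Mapping.keys q \<subseteq> SE"
  by (auto simp: poly_in_def)

lemma lm_iota:
  assumes "poly_in A (p :: _ \<Rightarrow>\<^sub>0 'k)" "p \<noteq> 0"
  shows "lm (\<lambda>m m'. lt (push exp_incl m) (push exp_incl m')) p \<in> Poly_Mapping.keys p \<and>
         lm lt (push (push exp_incl) p) = push exp_incl (lm (\<lambda>m m'. lt (push exp_incl m) (push exp_incl m')) p)"
proof -
  let ?q = "push (push exp_incl) p"
  have q0: "?q \<noteq> 0"
  proof
    assume "?q = 0"
    then have "push (push exp_incl) p = push (push exp_incl) (0 :: ((nat \<Rightarrow>\<^sub>0 nat) \<Rightarrow>\<^sub>0 nat) \<Rightarrow>\<^sub>0 'k)" by simp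
    then have "p = 0" by (rule injD[OF inj_iota])
    then show False using assms(2) by simp
  qed
  have sub: "Poly_Mapping.keys ?q \<subseteq> SE" by (rule keys_sub_SE[OF poly_iota[OF assms(1)]])
  have K: "Poly_Mapping.keys ?q = push exp_incl ` Poly_Mapping.keys p" by (rule keys_push[OF inj_iotam])
  obtain M where M: "M = lm lt ?q" by blast
  have Mx: "M \<in> Poly_Mapping.keys ?q" "\<forall>m'\<in>Poly_Mapping.keys ?q. m' \<noteq> M \<longrightarrow> lt m' M"
    using lm_ex[OF irr tr tot sub q0] M by auto
  then obtain m0 where m0: "m0 \<in> Poly_Mapping.keys p" "M = push exp_incl m0" using K by auto
  have IS: "push exp_incl a \<in> SE" if "a \<in> Poly_Mapping.keys p" for a using that K sub by blast
  have "lm (\<lambda>m m'. lt (push exp_incl m) (push exp_incl m')) p = m0"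
  proof (rule lm_eqI[where S = "Poly_Mapping.keys p"])
    show "\<forall>a\<in>Poly_Mapping.keys p. \<not> lt (push exp_incl a) (push exp_incl a)"
      using IS irr by simp
    show "\<forall>a\<in>Poly_Mapping.keys p. \<forall>b\<in>Poly_Mapping.keys p. \<forall>c\<in>Poly_Mapping.keys p.
       lt (push exp_incl a) (push exp_incl b) \<longrightarrow> lt (push exp_incl b) (push exp_incl c) \<longrightarrow> lt (push exp_incl a) (push exp_incl c)"
      using tr[rule_format, OF IS IS IS] by blast
    show "Poly_Mapping.keys p \<subseteq> Poly_Mapping.keys p" by simp
    show "m0 \<in> Poly_Mapping.keys p" by (rule m0(1))
    show "\<forall>m'\<in>Poly_Mapping.keys p. m' \<noteq> m0 \<longrightarrow> lt (push exp_incl m') (push exp_incl m0)"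
    proof (intro ballI impI)
      fix m' assume "m' \<in> Poly_Mapping.keys p" "m' \<noteq> m0"
      then have "push exp_incl m' \<in> Poly_Mapping.keys ?q" "push exp_incl m' \<noteq> M"
        using K m0 inj_iotam by (auto simp: inj_eq)
      then show "lt (push exp_incl m') (push exp_incl m0)" using Mx m0 by auto
    qed
  qed
  then show ?thesis using m0 M by simp
qed

end



context gbsetup begin

lemma gb_in_SA:
  assumes gG: "g \<in> G" and lmP: "Poly_Mapping.keys (lm lt g) \<subseteq> exp_incl ` A"
  shows "\<exists>g0. poly_in A g0 \<and> push (push exp_incl) g0 = g"
proof -
  define P where "P M \<longleftrightarrow> Poly_Mapping.keys M \<subseteq> exp_incl ` A" for M :: "((nat \<times> nat) \<Rightarrow>\<^sub>0 nat) \<Rightarrow>\<^sub>0 nat"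
  have gI: "g \<in> toric_ideal E" using gG GB_sub by blast
  then have gpoly: "poly_in E g" and gtor: "toric_map E g = 0" by (auto simp: toric_ideal_def)
  have g0: "g \<noteq> 0" using gG GB_0 by blast
  have gsub: "Poly_Mapping.keys g \<subseteq> SE" by (rule keys_sub_SE[OF gpoly])
  have gkE: "Poly_Mapping.keys M \<subseteq> E" if "M \<in> Poly_Mapping.keys g" for M
    using gpoly that by (auto simp: poly_in_def mon_in_def)
  define f2 where "f2 = (\<lambda>M. if P M then 0 else Poly_Mapping.lookup g M)"
  have fin: "finite {M. f2 M \<noteq> 0}"
    by (rule finite_subset[OF _ finite_keys[of g]]) (auto simp: f2_def in_keys_iff split: if_splits)
  define g2 where "g2 = Abs_poly_mapping f2"
  have lg2: "Poly_Mapping.lookup g2 = f2" using fin by (simp add: g2_def)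
  have kg2: "Poly_Mapping.keys g2 = {M\<in>Poly_Mapping.keys g. \<not> P M}"
    by (auto simp: in_keys_iff lg2 f2_def split: if_splits)
  have g2poly: "poly_in E g2" using gpoly by (auto simp: poly_in_def kg2)
  have g2tor: "toric_map E g2 = 0"
    unfolding toric_map_zero_iff
  proof
    fix b
    show "sum (Poly_Mapping.lookup g2) {M\<in>Poly_Mapping.keys g2. evm M = b} = 0"
    proof (cases "Poly_Mapping.keys b \<subseteq> range incl1")
      case True
      have emp: "{M\<in>Poly_Mapping.keys g2. evm M = b} = {}"
      proof (rule ccontr)
        assume "{M\<in>Poly_Mapping.keys g2. evm M = b} \<noteq> {}"
        then obtain M where M: "M \<in> Poly_Mapping.keys g" "\<not> P M" "evm M = b" by (auto simp: kg2)
        then have "P M" using col1_iff[OF gkE[OF M(1)]] True by (simp add: P_def)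
        then show False using M by simp
      qed
      show ?thesis unfolding emp by simp
    next
      case False
      have eq: "{M\<in>Poly_Mapping.keys g2. evm M = b} = {M\<in>Poly_Mapping.keys g. evm M = b}"
      proof (intro equalityI subsetI)
        fix M assume "M \<in> {M\<in>Poly_Mapping.keys g2. evm M = b}"
        then show "M \<in> {M\<in>Poly_Mapping.keys g. evm M = b}" by (simp add: kg2)
      next
        fix M assume M: "M \<in> {M\<in>Poly_Mapping.keys g. evm M = b}"
        have "\<not> P M"
        proof
          assume "P M"
          then have "Poly_Mapping.keys (evm M) \<subseteq> range incl1"
            using col1_iff[OF gkE] M by (simp add: P_def)
          then show False using False M by simp
        qed
        then show "M \<in> {M\<in>Poly_Mapping.keys g2. evm M = b}" using M by (simp add: kg2)
      qed
      have "sum (Poly_Mapping.lookup g2) {M\<in>Poly_Mapping.keys g2. evm M = b}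
          = sum (Poly_Mapping.lookup g) {M\<in>Poly_Mapping.keys g2. evm M = b}"
        by (rule sum.cong) (auto simp: lg2 f2_def kg2)
      also have "\<dots> = sum (Poly_Mapping.lookup g) {M\<in>Poly_Mapping.keys g. evm M = b}"
        unfolding eq ..
      also have "\<dots> = 0" using gtor by (simp add: toric_map_zero_iff)
      finally show ?thesis .
    qed
  qed
  have g2I: "g2 \<in> toric_ideal E" using g2poly g2tor by (simp add: toric_ideal_def)
  have "g2 = 0"
  proof (rule ccontr)
    assume g20: "g2 \<noteq> 0"
    define L where "L = lm lt g2"
    have Lx: "L \<in> Poly_Mapping.keys g2"
      using lm_ex[OF irr tr tot keys_sub_SE[OF g2poly] g20] by (simp add: L_def)
    then have Lg: "L \<in> Poly_Mapping.keys g" and LP: "\<not> P L" by (auto simp: kg2)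
    obtain g' where g': "g' \<in> G" "mdvd (lm lt g') L" using GB_dvd[OF g2I g20] L_def by blast
    have lmg: "lm lt g \<in> Poly_Mapping.keys g"
      "\<forall>m'\<in>Poly_Mapping.keys g. m' \<noteq> lm lt g \<longrightarrow> lt m' (lm lt g)"
      using lm_ex[OF irr tr tot gsub g0] by auto
    show False
    proof (cases "g' = g")
      case False
      then show False using GB_red[OF gG g'(1) False Lg] g'(2) by blast
    next
      case True
      then obtain c where c: "L = lm lt g + c" using g' by (auto simp: mdvd_def)
      have "L \<noteq> lm lt g" using LP lmP by (auto simp: P_def)
      then have lt1: "lt L (lm lt g)" using lmg Lg by blast
      have "c \<noteq> 0" using c \<open>L \<noteq> lm lt g\<close> by auto
      have LSE: "L \<in> SE" using Lg gsub by blast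
      have gSE: "lm lt g \<in> SE" using lmg gsub by blast
      have cSE: "mon_in E c"
        using LSE keys_add_nat_right[of c "lm lt g"] c by (auto simp: mon_in_def)
      have "lt 0 c" using zero_lt[OF cSE \<open>c \<noteq> 0\<close>] .
      moreover have m0: "mon_in E 0" by (simp add: mon_in_def)
      moreover have gm: "mon_in E (lm lt g)" using gSE by simp
      ultimately have "lt (0 + lm lt g) (c + lm lt g)"
        using mono[OF m0 cSE gm] by blast
      then have lt2: "lt (lm lt g) L" using c by (simp add: add.commute)
      have "lt L L" using tr[rule_format, OF LSE gSE LSE lt1 lt2] .
      then show False using irr LSE by blast
    qed
  qed
  have allP: "P M" if "M \<in> Poly_Mapping.keys g" for M
  proof (rule ccontr)
    assume "\<not> P M"
    then have "M \<in> Poly_Mapping.keys g2" using that by (simp add: kg2)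
    then show False using \<open>g2 = 0\<close> by simp
  qed
  have "Poly_Mapping.keys g \<subseteq> push exp_incl ` {m. Poly_Mapping.keys m \<subseteq> A}"
  proof
    fix M assume "M \<in> Poly_Mapping.keys g"
    then have "Poly_Mapping.keys M \<subseteq> exp_incl ` A" using allP by (simp add: P_def)
    then obtain m where "Poly_Mapping.keys m \<subseteq> A" "push exp_incl m = M"
      using push_surj[OF inj_exp_incl] by blast
    then show "M \<in> push exp_incl ` {m. Poly_Mapping.keys m \<subseteq> A}" by blast
  qed
  then obtain g0 where "Poly_Mapping.keys g0 \<subseteq> {m. Poly_Mapping.keys m \<subseteq> A}" "push (push exp_incl) g0 = g"
    using push_surj[OF inj_iotam] by blast
  then show ?thesis by (auto simp: poly_in_def mon_in_def)
qed

end



context gbsetup begin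

lemma iota_zero_iff: "push (push exp_incl) (p :: ((nat \<Rightarrow>\<^sub>0 nat) \<Rightarrow>\<^sub>0 nat) \<Rightarrow>\<^sub>0 'k) = 0 \<longleftrightarrow> p = 0"
proof
  assume "push (push exp_incl) p = 0"
  then have "push (push exp_incl) p = push (push exp_incl) (0 :: ((nat \<Rightarrow>\<^sub>0 nat) \<Rightarrow>\<^sub>0 nat) \<Rightarrow>\<^sub>0 'k)" by simp
  then show "p = 0" by (rule injD[OF inj_iota])
qed simp

theorem main:
  "is_reduced_GB (\<lambda>m m'. lt (push exp_incl m) (push exp_incl m'))
     (toric_ideal A :: (((nat \<Rightarrow>\<^sub>0 nat) \<Rightarrow>\<^sub>0 nat) \<Rightarrow>\<^sub>0 'k) set)
     {p. poly_in A p \<and> push (push exp_incl) p \<in> G}"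
proof -
  let ?LT = "\<lambda>m m'. lt (push exp_incl m) (push exp_incl m')"
  let ?G = "{p. poly_in A p \<and> push (push exp_incl) p \<in> G}"
  have fin: "finite ?G"
    by (rule finite_subset[OF _ finite_vimageI[OF GB_fin inj_iota]]) auto
  have sub: "?G \<subseteq> toric_ideal A"
    using toric_iff GB_sub by blast
  have nz: "0 \<notin> ?G" using GB_0 by simp
  have dvd: "\<forall>f\<in>(toric_ideal A :: (((nat \<Rightarrow>\<^sub>0 nat) \<Rightarrow>\<^sub>0 nat) \<Rightarrow>\<^sub>0 'k) set). f \<noteq> 0 \<longrightarrow> (\<exists>g\<in>?G. mdvd (lm ?LT g) (lm ?LT f))"
  proof (intro ballI impI)
    fix f :: "((nat \<Rightarrow>\<^sub>0 nat) \<Rightarrow>\<^sub>0 nat) \<Rightarrow>\<^sub>0 'k"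
    assume fI: "f \<in> toric_ideal A" and f0: "f \<noteq> 0"
    have fA: "poly_in A f" using fI by (simp add: toric_ideal_def)
    have ifI: "push (push exp_incl) f \<in> toric_ideal E" using toric_iff[OF fA] fI by simp
    have if0: "push (push exp_incl) f \<noteq> 0" using f0 iota_zero_iff by simp
    obtain g where g: "g \<in> G" "mdvd (lm lt g) (lm lt (push (push exp_incl) f))"
      using GB_dvd[OF ifI if0] by blast
    have lf: "lm ?LT f \<in> Poly_Mapping.keys f"
      "lm lt (push (push exp_incl) f) = push exp_incl (lm ?LT f)"
      using lm_iota[OF fA f0] by auto
    obtain c where c: "push exp_incl (lm ?LT f) = lm lt g + c" using g(2) lf(2) by (auto simp: mdvd_def)
    have "Poly_Mapping.keys (lm lt g) \<subseteq> Poly_Mapping.keys (push exp_incl (lm ?LT f))"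
      using keys_add_nat_left[of "lm lt g" c] c by simp
    also have "\<dots> = exp_incl ` Poly_Mapping.keys (lm ?LT f)" by (rule keys_push[OF inj_exp_incl])
    also have "\<dots> \<subseteq> exp_incl ` A" using fA lf(1) by (auto simp: poly_in_def mon_in_def)
    finally have lmA: "Poly_Mapping.keys (lm lt g) \<subseteq> exp_incl ` A" .
    obtain g0 where g0: "poly_in A g0" "push (push exp_incl) g0 = g"
      using gb_in_SA[OF g(1) lmA] by blast
    have g0G: "g0 \<in> ?G" using g0 g(1) by simp
    have g00: "g0 \<noteq> 0" using g0 g(1) GB_0 by auto
    have "lm lt g = push exp_incl (lm ?LT g0)" using lm_iota[OF g0(1) g00] g0(2) by simp
    then have "mdvd (push exp_incl (lm ?LT g0)) (push exp_incl (lm ?LT f))" using g(2) lf(2) by simp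
    then have "mdvd (lm ?LT g0) (lm ?LT f)" by (rule mdvd_iota)
    then show "\<exists>g\<in>?G. mdvd (lm ?LT g) (lm ?LT f)" using g0G by blast
  qed
  have lc: "\<forall>g\<in>?G. lc ?LT g = 1"
  proof
    fix g0 assume g0: "g0 \<in> ?G"
    then have g00: "g0 \<noteq> 0" using GB_0 by auto
    have "lc ?LT g0 = Poly_Mapping.lookup (push (push exp_incl) g0) (push exp_incl (lm ?LT g0))"
      by (simp add: lc_def lookup_push_inj[OF inj_iotam])
    also have "\<dots> = lc lt (push (push exp_incl) g0)"
      using lm_iota[of g0] g0 g00 by (simp add: lc_def)
    also have "\<dots> = 1" using GB_lc g0 by simp
    finally show "lc ?LT g0 = 1" .
  qed
  have red: "\<forall>g\<in>?G. \<forall>g'\<in>?G. g' \<noteq> g \<longrightarrow> (\<forall>m\<in>Poly_Mapping.keys g. \<not> mdvd (lm ?LT g') m)"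
  proof (intro ballI impI notI)
    fix g g' m
    assume gG: "g \<in> ?G" and g'G: "g' \<in> ?G" and ne: "g' \<noteq> g" and m: "m \<in> Poly_Mapping.keys g"
      and d: "mdvd (lm ?LT g') m"
    have g'0: "g' \<noteq> 0" using g'G GB_0 by auto
    have ne2: "push (push exp_incl) g' \<noteq> push (push exp_incl) g"
    proof
      assume "push (push exp_incl) g' = push (push exp_incl) g"
      then have "g' = g" by (rule injD[OF inj_iota])
      then show False using ne by simp
    qed
    have mk: "push exp_incl m \<in> Poly_Mapping.keys (push (push exp_incl) g)"
      using m by (simp add: keys_push[OF inj_iotam])
    have "mdvd (push exp_incl (lm ?LT g')) (push exp_incl m)" by (rule mdvd_iota2[OF d])
    then have "mdvd (lm lt (push (push exp_incl) g')) (push exp_incl m)"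
      using lm_iota[of g'] g'G g'0 by simp
    then show False using GB_red[of "push (push exp_incl) g" "push (push exp_incl) g'"] gG g'G ne2 mk
      by blast
  qed
  show ?thesis unfolding is_reduced_GB_def using fin sub nz dvd lc red by blast
qed

end


theorem proposition2p9:
  fixes n :: nat and k :: "nat \<Rightarrow> nat" and A :: "(nat \<Rightarrow>\<^sub>0 nat) set"
    and lt :: "(((nat \<times> nat) \<Rightarrow>\<^sub>0 nat) \<Rightarrow>\<^sub>0 nat) \<Rightarrow> (((nat \<times> nat) \<Rightarrow>\<^sub>0 nat) \<Rightarrow>\<^sub>0 nat) \<Rightarrow> bool"
    and G :: "((((nat \<times> nat) \<Rightarrow>\<^sub>0 nat) \<Rightarrow>\<^sub>0 nat) \<Rightarrow>\<^sub>0 'k::field) set"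
  assumes alpha: "\<forall>i\<in>{1..n}. 1 \<le> k i"
    and A_fin: "finite A"
    and A_mons: "\<forall>u\<in>A. mon_in {1..n} u"
    and A_min: "\<forall>u\<in>A. \<forall>v\<in>A. u \<noteq> v \<longrightarrow> \<not> mdvd u v"
    and A_hom: "homogeneous_toric n A"
    and ord: "term_order (expansion n k A) lt"
    and GB: "is_reduced_GB lt (toric_ideal (expansion n k A)) G"
  shows "is_reduced_GB (\<lambda>m m'. lt (rename_mon exp_incl m) (rename_mon exp_incl m'))
           (toric_ideal A :: (((nat \<Rightarrow>\<^sub>0 nat) \<Rightarrow>\<^sub>0 nat) \<Rightarrow>\<^sub>0 'k) set)
           {p. poly_in A p \<and> rename_poly exp_incl p \<in> G}"
proof -
  interpret gbsetup n k A lt G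
    using alpha A_mons ord GB by unfold_locales
  have e1: "rename_mon exp_incl = push exp_incl" by (rule rename_mon_push)
  have e2: "rename_poly exp_incl = push (push exp_incl)" by (simp add: rename_poly_push rename_mon_push)
  show ?thesis unfolding e1 e2 by (rule main)
qed

end
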